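(* Let $f\in L^1(\mathbb{R})$ satisfy $\int_\mathbb{R}|y|^\epsilon|f(y)|\,\mathrm{d}y<\infty$ for some $\epsilon>0$, and for $k\in\mathbb{N}$ set $g_k(x):=(1+|x|^\epsilon)|f_k(x)|$. If for some $\overline{k}\in\mathbb{N}$ $$\sum_{m\in\mathbb{Z}}\sup_{z\in[m,m+1)}g_{\overline{k}}(z)<\infty,$$ then $\sum_{m\in\mathbb{Z}}\sup_{z\in[m,m+1)}g_k(z)<\infty$ for every $k\ge\overline{k}$.
   Context: $f_1:=f$, $f_{k+1}:=f_k*f$, i.e. $f_{k+1}(x)=\int_\mathbb{R} f_k(x-y)f(y)\,\mathrm{d}y$. *)

theory Defs
  imports "HOL-Analysis.Analysis"
begin

text \<open>Convolution powers: f_1 = f, f_(k+1)(x) = integral of f_k(x-y) f(y) dy.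
  Index 0 is not used (k ranges over positive naturals); we set it to f as well.\<close>
fun conv_pow :: "(real \<Rightarrow> real) \<Rightarrow> nat \<Rightarrow> real \<Rightarrow> real" where
  "conv_pow f 0 = f"
| "conv_pow f (Suc 0) = f"
| "conv_pow f (Suc (Suc k)) = (\<lambda>x. LINT y|lborel. conv_pow f (Suc k) (x - y) * f y)"

definition gfun :: "(real \<Rightarrow> real) \<Rightarrow> real \<Rightarrow> nat \<Rightarrow> real \<Rightarrow> real" where
  "gfun f \<epsilon> k x = (1 + \<bar>x\<bar> powr \<epsilon>) * \<bar>conv_pow f k x\<bar>"

end

theory Submission
  imports Defs
begin

lemma real_key:
  fixes z y e :: real assumes e: "e > 0"
  shows "1 + \<bar>z\<bar> powr e \<le> 2 powr e * ((1 + \<bar>z - y\<bar> powr e) * (1 + \<bar>y\<bar> powr e))"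
proof -
  let ?a = "\<bar>z - y\<bar>" and ?b = "\<bar>y\<bar>"
  have t: "\<bar>z\<bar> \<le> ?a + ?b" using abs_triangle_ineq[of "z-y" y] by simp
  have "\<bar>z\<bar> \<le> 2 * max ?a ?b" using t max.cobounded1[of ?a ?b] max.cobounded2[of ?b ?a] by linarith
  hence "\<bar>z\<bar> powr e \<le> (2 * max ?a ?b) powr e" by (intro powr_mono2) (use e in auto)
  also have "\<dots> = 2 powr e * max ?a ?b powr e" by (simp add: powr_mult)
  also have "max ?a ?b powr e \<le> ?a powr e + ?b powr e"
    by (cases "?a \<le> ?b") (auto simp: max_def)
  finally have 1: "\<bar>z\<bar> powr e \<le> 2 powr e * (?a powr e + ?b powr e)"
    by (simp add: mult_left_mono order_trans)
  have 2: "1 \<le> 2 powr e" using e by (intro ge_one_powr_ge_zero) auto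
  have "1 + \<bar>z\<bar> powr e \<le> 2 powr e * (1 + ?a powr e + ?b powr e)"
    using 1 2 by (simp add: algebra_simps)
  also have "\<dots> \<le> 2 powr e * ((1 + ?a powr e) * (1 + ?b powr e))"
    by (intro mult_left_mono) (auto simp: algebra_simps)
  finally show ?thesis .
qed

lemma abs_LINT_le:
  fixes \<phi> :: "real \<Rightarrow> real"
  shows "ennreal \<bar>LINT y|M. \<phi> y\<bar> \<le> (\<integral>\<^sup>+ y. ennreal \<bar>\<phi> y\<bar> \<partial>M)"
proof (cases "integrable M \<phi>")
  case True
  have "\<bar>LINT y|M. \<phi> y\<bar> \<le> (LINT y|M. \<bar>\<phi> y\<bar>)" by (rule integral_abs_bound)
  also have "ennreal (LINT y|M. \<bar>\<phi> y\<bar>) = (\<integral>\<^sup>+ y. ennreal \<bar>\<phi> y\<bar> \<partial>M)"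
    by (rule nn_integral_eq_integral[symmetric]) (use True in auto)
  finally show ?thesis by (simp add: ennreal_leI)
next
  case False thus ?thesis by (simp add: not_integrable_integral_eq)
qed

theorem mainTheorem14:
  fixes f :: "real \<Rightarrow> real" and \<epsilon> :: real and kbar :: nat
  assumes "integrable lborel f"
    and "\<epsilon> > 0"
    and "integrable lborel (\<lambda>y. \<bar>y\<bar> powr \<epsilon> * \<bar>f y\<bar>)"
    and "kbar \<ge> 1"
    and "(\<Sum>\<^sub>\<infinity> m::int. (SUP z\<in>{real_of_int m..<real_of_int m + 1}. ennreal (gfun f \<epsilon> kbar z))) < \<infinity>"
  shows "\<forall>k\<ge>kbar. (\<Sum>\<^sub>\<infinity> m::int. (SUP z\<in>{real_of_int m..<real_of_int m + 1}. ennreal (gfun f \<epsilon> k z))) < \<infinity>"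
proof -
  define h where "h y = (1 + \<bar>y\<bar> powr \<epsilon>) * \<bar>f y\<bar>" for y
  have hint: "integrable lborel h"
    unfolding h_def distrib_right using assms(1,3) by (auto intro!: integrable_add)
  have hmeas[measurable]: "h \<in> borel_measurable lborel" using hint by auto
  have hnn: "h y \<ge> 0" for y by (simp add: h_def)
  have hfin: "(\<integral>\<^sup>+ y. ennreal (h y) \<partial>lborel) < \<infinity>"
    using nn_integral_eq_integral[OF hint] hnn by simp
  define G where "G k m = (SUP z\<in>{real_of_int m..<real_of_int m + 1}. ennreal (gfun f \<epsilon> k z))" for k m
  have stepL: "(\<Sum>\<^sub>\<infinity> m::int. G (Suc k) m) < \<infinity>" if k1: "k \<ge> 1" and fin: "(\<Sum>\<^sub>\<infinity> m::int. G k m) < \<infinity>" for k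
  proof -
    define S where "S = (\<Sum>\<^sub>\<infinity> m::int. G k m)"
    define B where "B m y = ennreal (2 powr \<epsilon>) * (G k \<lfloor>real_of_int m - y\<rfloor> + G k (\<lfloor>real_of_int m - y\<rfloor> + 1)) * ennreal (h y)" for m y
    have Bmeas: "B m \<in> borel_measurable lborel" for m
    proof -
      have fl: "(\<lambda>y. \<lfloor>real_of_int m - y\<rfloor>) \<in> measurable lborel (count_space UNIV)" by measurable
      have "(\<lambda>y. G k \<lfloor>real_of_int m - y\<rfloor>) \<in> borel_measurable lborel"
        by (rule measurable_compose_countable'[where g="\<lambda>y. \<lfloor>real_of_int m - y\<rfloor>" and I=UNIV and f="\<lambda>i x. G k i"]) (use fl in auto)
      moreover have "(\<lambda>y. G k (\<lfloor>real_of_int m - y\<rfloor> + 1)) \<in> borel_measurable lborel"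
        by (rule measurable_compose_countable'[where g="\<lambda>y. \<lfloor>real_of_int m - y\<rfloor>" and I=UNIV and f="\<lambda>i x. G k (i+1)"]) (use fl in auto)
      ultimately show ?thesis unfolding B_def by measurable
    qed
    have Gbound: "G (Suc k) m \<le> (\<integral>\<^sup>+ y. B m y \<partial>lborel)" for m
      unfolding G_def[of "Suc k"]
    proof (rule SUP_least)
      fix z assume z: "z \<in> {real_of_int m..<real_of_int m + 1}"
      obtain k' where k': "k = Suc k'" using k1 by (cases k) auto
      have "ennreal (gfun f \<epsilon> (Suc k) z) = ennreal \<bar>LINT y|lborel. (1 + \<bar>z\<bar> powr \<epsilon>) * (conv_pow f k (z - y) * f y)\<bar>"
        by (simp add: gfun_def k' abs_mult)
      also have "\<dots> \<le> (\<integral>\<^sup>+ y. ennreal \<bar>(1 + \<bar>z\<bar> powr \<epsilon>) * (conv_pow f k (z - y) * f y)\<bar> \<partial>lborel)"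
        by (rule abs_LINT_le)
      also have "\<dots> \<le> (\<integral>\<^sup>+ y. B m y \<partial>lborel)"
      proof (rule nn_integral_mono)
        fix y
        define n where "n = \<lfloor>real_of_int m - y\<rfloor>"
        have n1: "real_of_int n \<le> real_of_int m - y" "real_of_int m - y < real_of_int n + 1"
          unfolding n_def by linarith+
        have gle: "ennreal (gfun f \<epsilon> k (z - y)) \<le> G k n + G k (n + 1)"
        proof (cases "z - y < real_of_int n + 1")
          case True
          hence "z - y \<in> {real_of_int n..<real_of_int n + 1}" using z n1 by auto
          hence "ennreal (gfun f \<epsilon> k (z - y)) \<le> G k n" unfolding G_def by (rule SUP_upper)
          thus ?thesis by (simp add: add_increasing2)
        next
          case False
          hence "z - y \<in> {real_of_int (n+1)..<real_of_int (n+1) + 1}" using z n1 by auto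
          hence "ennreal (gfun f \<epsilon> k (z - y)) \<le> G k (n+1)" unfolding G_def by (rule SUP_upper)
          thus ?thesis by (simp add: add_increasing)
        qed
        have "\<bar>(1 + \<bar>z\<bar> powr \<epsilon>) * (conv_pow f k (z - y) * f y)\<bar>
              = (1 + \<bar>z\<bar> powr \<epsilon>) * (\<bar>conv_pow f k (z - y)\<bar> * \<bar>f y\<bar>)"
          by (simp add: abs_mult)
        also have "\<dots> \<le> (2 powr \<epsilon> * ((1 + \<bar>z - y\<bar> powr \<epsilon>) * (1 + \<bar>y\<bar> powr \<epsilon>))) * (\<bar>conv_pow f k (z - y)\<bar> * \<bar>f y\<bar>)"
          by (intro mult_right_mono real_key) (use assms(2) in auto)
        also have "\<dots> = 2 powr \<epsilon> * gfun f \<epsilon> k (z - y) * h y"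
          by (simp add: gfun_def h_def algebra_simps)
        finally have "ennreal \<bar>(1 + \<bar>z\<bar> powr \<epsilon>) * (conv_pow f k (z - y) * f y)\<bar>
            \<le> ennreal (2 powr \<epsilon> * gfun f \<epsilon> k (z - y) * h y)"
          by (rule ennreal_leI)
        also have "\<dots> = ennreal (2 powr \<epsilon>) * ennreal (gfun f \<epsilon> k (z - y)) * ennreal (h y)"
        proof -
          have g0: "gfun f \<epsilon> k (z - y) \<ge> 0" by (simp add: gfun_def)
          show ?thesis using g0 hnn[of y] by (simp add: ennreal_mult)
        qed
        also have "\<dots> \<le> B m y" unfolding B_def n_def[symmetric]
          by (intro mult_right_mono mult_left_mono gle) auto
        finally show "ennreal \<bar>(1 + \<bar>z\<bar> powr \<epsilon>) * (conv_pow f k (z - y) * f y)\<bar> \<le> B m y" .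
      qed
      finally show "ennreal (gfun f \<epsilon> (Suc k) z) \<le> (\<integral>\<^sup>+ y. B m y \<partial>lborel)" .
    qed
    have shift: "(\<Sum>m\<in>F. G k (m + j)) \<le> S" if "finite F" for F :: "int set" and j
    proof -
      have "(\<Sum>m\<in>F. G k (m + j)) = (\<Sum>n\<in>(\<lambda>m. m + j) ` F. G k n)"
        by (subst sum.reindex) (auto simp: inj_on_def)
      also have "\<dots> \<le> S"
      proof -
        have "(\<Sum>n\<in>(\<lambda>m. m + j) ` F. G k n) = (\<Sum>\<^sub>\<infinity> n\<in>(\<lambda>m. m + j) ` F. G k n)"
          using that by (simp add: infsum_finite)
        also have "\<dots> \<le> (\<Sum>\<^sub>\<infinity> n::int. G k n)"
          by (rule infsum_mono_neutral) (auto simp: nonneg_summable_on_complete)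
        finally show "(\<Sum>n\<in>(\<lambda>m. m + j) ` F. G k n) \<le> S" by (simp add: S_def)
      qed
      finally show ?thesis .
    qed
    have finsum: "(\<Sum>m\<in>F. G (Suc k) m) \<le> ennreal (2 powr \<epsilon>) * (2 * S) * (\<integral>\<^sup>+ y. ennreal (h y) \<partial>lborel)"
      if F: "finite F" for F :: "int set"
    proof -
      have "(\<Sum>m\<in>F. G (Suc k) m) \<le> (\<Sum>m\<in>F. \<integral>\<^sup>+ y. B m y \<partial>lborel)"
        by (intro sum_mono Gbound)
      also have "\<dots> = (\<integral>\<^sup>+ y. (\<Sum>m\<in>F. B m y) \<partial>lborel)"
        by (rule nn_integral_sum[symmetric]) (use Bmeas in auto)
      also have "\<dots> \<le> (\<integral>\<^sup>+ y. ennreal (2 powr \<epsilon>) * (2 * S) * ennreal (h y) \<partial>lborel)"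
      proof (rule nn_integral_mono)
        fix y
        have fe: "\<lfloor>real_of_int m - y\<rfloor> = m + \<lfloor>- y\<rfloor>" for m
          by (metis add.commute diff_conv_add_uminus floor_add_int)
        have "(\<Sum>m\<in>F. B m y) = ennreal (2 powr \<epsilon>) * ((\<Sum>m\<in>F. G k (m + \<lfloor>- y\<rfloor>)) + (\<Sum>m\<in>F. G k (m + (\<lfloor>- y\<rfloor> + 1)))) * ennreal (h y)"
          unfolding B_def fe by (simp only: sum.distrib[symmetric] sum_distrib_left sum_distrib_right add.assoc)
        also have "\<dots> \<le> ennreal (2 powr \<epsilon>) * (2 * S) * ennreal (h y)"
          using add_mono[OF shift[OF F] shift[OF F]]
          by (intro mult_right_mono mult_left_mono) (auto simp: mult_2)
        finally show "(\<Sum>m\<in>F. B m y) \<le> ennreal (2 powr \<epsilon>) * (2 * S) * ennreal (h y)" .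
      qed
      also have "\<dots> = ennreal (2 powr \<epsilon>) * (2 * S) * (\<integral>\<^sup>+ y. ennreal (h y) \<partial>lborel)"
        by (rule nn_integral_cmult) auto
      finally show ?thesis .
    qed
    have "(\<Sum>\<^sub>\<infinity> m::int. G (Suc k) m) \<le> ennreal (2 powr \<epsilon>) * (2 * S) * (\<integral>\<^sup>+ y. ennreal (h y) \<partial>lborel)"
      by (rule infsum_le_finite_sums) (use finsum in \<open>auto simp: nonneg_summable_on_complete\<close>)
    also have "\<dots> < \<infinity>" using fin hfin unfolding S_def
      by (simp add: ennreal_mult_less_top less_top)
    finally show ?thesis .
  qed
  show ?thesis
  proof (intro allI impI)
    fix k assume "kbar \<le> k"
    thus "(\<Sum>\<^sub>\<infinity> m::int. (SUP z\<in>{real_of_int m..<real_of_int m + 1}. ennreal (gfun f \<epsilon> k z))) < \<infinity>"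
    proof (induction k rule: dec_induct)
      case base thus ?case using assms(5) by simp
    next
      case (step k)
      thus ?case using stepL[of k] step.hyps step.IH assms(4) unfolding G_def by simp
    qed
  qed
qed

end
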